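(* Let $(V,b,\mu)$ be a locally finite, weighted, connected graph with $\mu(x)\geq\mu_0$ for all $x\in V$, for some constant $\mu_0>0$, and let $\theta$ be a phase function on it. Fix $x_0\in V$ and, for $n\in\mathbb{Z}_+$, let $\beta_n=\frac{d_{2n}p_{2n}}{\mu_0 n}$ and let $\chi_n$ be the cut-off function defined below. Then for every $u\in\ell^2(V,\mu)$, $$\|P_{\chi_n}[u]\|\leq 2\beta_n\|u\|\qquad\text{and}\qquad \|u\,\Delta\chi_n\|\leq\beta_n\|u\|.$$
   Context: $V$ is a countably infinite set, $\mu\colon V\to(0,\infty)$, and $b\colon V\times V\to[0,\infty)$ satisfies $b(x,y)=b(y,x)$, $b(x,x)=0$, $\deg(x):=\#\{y: b(x,y)>0\}<\infty$; $x\sim y$ means $b(x,y)>0$; connectedness means any two vertices are joined by a finite path of neighbors, and $d(x,y)$ is the combinatorial (path-length) distance; $r(x)=d(x_0,x)$. A phase function is $\theta\colon V\times V\to[-\pi,\pi]$ with $\theta(x,y)=-\theta(y,x)$. $\ell^2(V,\mu)$ is the space of $f\colon V\to\mathbb{C}$ with $\|f\|^2=\sum_x\mu(x)|f(x)|^2<\infty$, inner product $(f,g)=\sum_x\mu(x)f(x)\overline{g(x)}$. $B(x_0,n)=\{x: r(x)\leq n\}$ (plus edges between such vertices), $d_n=\max_{x\in B(x_0,n)}\deg(x)$, $p_n=\max_{x\in B(x_0,n)}\max_{y\in V}b(x,y)$. The Laplacian is $(\Delta\psi)(x)=\frac1{\mu(x)}\sum_y b(x,y)(\psi(x)-\psi(y))$.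 For $u,\psi\in C(V)$, $(P_\psi[u])(x)=\frac{1}{\mu(x)}\sum_{y\in V}b(x,y)(\psi(x)-\psi(y))(u(x)-e^{i\theta(x,y)}u(y))$. The cut-off is $\chi_n(x)=\left(\left(\frac{2n-d(x_0,x)}{n}\right)\vee 0\right)\wedge 1$, where $a\wedge z=\min\{a,z\}$, $a\vee z=\max\{a,z\}$. *)

theory Defs
  imports "HOL-Analysis.Analysis"
begin

fun gwalk :: "('a \<Rightarrow> 'a \<Rightarrow> real) \<Rightarrow> nat \<Rightarrow> 'a \<Rightarrow> 'a \<Rightarrow> bool" where
  "gwalk b 0 x y = (x = y)"
| "gwalk b (Suc n) x y = (\<exists>z. b x z > 0 \<and> gwalk b n z y)"

definition graph_connected :: "('a \<Rightarrow> 'a \<Rightarrow> real) \<Rightarrow> bool" where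
  "graph_connected b = (\<forall>x y. \<exists>n. gwalk b n x y)"

definition gdist :: "('a \<Rightarrow> 'a \<Rightarrow> real) \<Rightarrow> 'a \<Rightarrow> 'a \<Rightarrow> nat" where
  "gdist b x y = (LEAST n. gwalk b n x y)"

definition gdeg :: "('a \<Rightarrow> 'a \<Rightarrow> real) \<Rightarrow> 'a \<Rightarrow> nat" where
  "gdeg b x = card {y. b x y > 0}"

definition gball :: "('a \<Rightarrow> 'a \<Rightarrow> real) \<Rightarrow> 'a \<Rightarrow> nat \<Rightarrow> 'a set" where
  "gball b x0 n = {x. gdist b x0 x \<le> n}"

definition dmax :: "('a \<Rightarrow> 'a \<Rightarrow> real) \<Rightarrow> 'a \<Rightarrow> nat \<Rightarrow> nat" where
  "dmax b x0 n = Max (gdeg b ` gball b x0 n)"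

definition pmax :: "('a \<Rightarrow> 'a \<Rightarrow> real) \<Rightarrow> 'a \<Rightarrow> nat \<Rightarrow> real" where
  "pmax b x0 n = Max ((\<lambda>x. Max (range (b x))) ` gball b x0 n)"

definition l2norm :: "('a \<Rightarrow> real) \<Rightarrow> ('a \<Rightarrow> complex) \<Rightarrow> real" where
  "l2norm \<mu> f = sqrt (\<Sum>\<^sub>\<infinity>x. \<mu> x * (cmod (f x))\<^sup>2)"

definition in_l2 :: "('a \<Rightarrow> real) \<Rightarrow> ('a \<Rightarrow> complex) \<Rightarrow> bool" where
  "in_l2 \<mu> f = ((\<lambda>x. \<mu> x * (cmod (f x))\<^sup>2) summable_on UNIV)"

text \<open>Laplacian (sum over the finitely many neighbours; other terms vanish).\<close>
definition glap :: "('a \<Rightarrow> 'a \<Rightarrow> real) \<Rightarrow> ('a \<Rightarrow> real) \<Rightarrow> ('a \<Rightarrow> real) \<Rightarrow> 'a \<Rightarrow> real" where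
  "glap b \<mu> \<psi> x = (1 / \<mu> x) * (\<Sum>y\<in>{y. b x y > 0}. b x y * (\<psi> x - \<psi> y))"

definition Pop :: "('a \<Rightarrow> 'a \<Rightarrow> real) \<Rightarrow> ('a \<Rightarrow> real) \<Rightarrow> ('a \<Rightarrow> 'a \<Rightarrow> real)
     \<Rightarrow> ('a \<Rightarrow> real) \<Rightarrow> ('a \<Rightarrow> complex) \<Rightarrow> 'a \<Rightarrow> complex" where
  "Pop b \<mu> \<theta> \<psi> u x = complex_of_real (1 / \<mu> x) *
     (\<Sum>y\<in>{y. b x y > 0}. complex_of_real (b x y * (\<psi> x - \<psi> y)) *
        (u x - exp (\<i> * complex_of_real (\<theta> x y)) * u y))"

definition cutoff :: "('a \<Rightarrow> 'a \<Rightarrow> real) \<Rightarrow> 'a \<Rightarrow> nat \<Rightarrow> 'a \<Rightarrow> real" where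
  "cutoff b x0 n x = min (max ((2 * real n - real (gdist b x0 x)) / real n) 0) 1"

end

theory Submission
  imports Defs
begin


lemma gwalk_snoc: "gwalk b (Suc n) x y = (\<exists>z. gwalk b n x z \<and> b z y > 0)"
  by (induction n arbitrary: x) auto

lemma gdist_walk: "graph_connected b \<Longrightarrow> gwalk b (gdist b x y) x y"
  unfolding gdist_def graph_connected_def by (meson LeastI_ex)

lemma gdist_le: "gwalk b m x y \<Longrightarrow> gdist b x y \<le> m"
  unfolding gdist_def by (rule Least_le)

lemma gdist_step:
  assumes "graph_connected b" "b x y > 0"
  shows "gdist b x0 y \<le> gdist b x0 x + 1"
proof -
  have "gwalk b (Suc (gdist b x0 x)) x0 y"
    unfolding gwalk_snoc using gdist_walk[OF assms(1), of x0 x] assms(2) by blast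
  then show ?thesis using gdist_le by fastforce
qed

lemma walkset_finite:
  assumes "\<And>x. finite {y. b x y > 0}"
  shows "finite {x. \<exists>m\<le>n. gwalk b m x0 x}"
proof (induction n)
  case 0
  then show ?case by simp
next
  case (Suc n)
  have "{x. \<exists>m\<le>Suc n. gwalk b m x0 x} \<subseteq> {x. \<exists>m\<le>n. gwalk b m x0 x} \<union>
      (\<Union>z\<in>{x. \<exists>m\<le>n. gwalk b m x0 x}. {y. b z y > 0})"
  proof
    fix x assume "x \<in> {x. \<exists>m\<le>Suc n. gwalk b m x0 x}"
    then obtain m where m: "m \<le> Suc n" "gwalk b m x0 x" by auto
    show "x \<in> {x. \<exists>m\<le>n. gwalk b m x0 x} \<union>
      (\<Union>z\<in>{x. \<exists>m\<le>n. gwalk b m x0 x}. {y. b z y > 0})"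
    proof (cases "m \<le> n")
      case True then show ?thesis using m by auto
    next
      case False
      then have "m = Suc n" using m by auto
      then obtain z where "gwalk b n x0 z" "b z x > 0" using m gwalk_snoc by metis
      then show ?thesis by auto
    qed
  qed
  moreover have "finite ({x. \<exists>m\<le>n. gwalk b m x0 x} \<union>
      (\<Union>z\<in>{x. \<exists>m\<le>n. gwalk b m x0 x}. {y. b z y > 0}))"
    using Suc assms by auto
  ultimately show ?case using finite_subset by blast
qed

lemma gball_finite:
  assumes "\<And>x. finite {y. b x y > 0}" "graph_connected b"
  shows "finite (gball b x0 n)"
proof -
  have "gball b x0 n \<subseteq> {x. \<exists>m\<le>n. gwalk b m x0 x}"
  proof
    fix x assume "x \<in> gball b x0 n"
    then have "gdist b x0 x \<le> n" unfolding gball_def by simp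
    then show "x \<in> {x. \<exists>m\<le>n. gwalk b m x0 x}" using gdist_walk[OF assms(2), of x0 x] by blast
  qed
  then show ?thesis by (rule finite_subset[OF _ walkset_finite[OF assms(1)]])
qed

lemma clip_lip: "\<bar>min (max (a::real) 0) 1 - min (max c 0) 1\<bar> \<le> \<bar>a - c\<bar>"
  unfolding min_def max_def by (smt (verit))

lemma cutoff_lip:
  assumes "n \<ge> 1" "\<bar>real (gdist b x0 x) - real (gdist b x0 y)\<bar> \<le> 1"
  shows "\<bar>cutoff b x0 n x - cutoff b x0 n y\<bar> \<le> 1 / real n"
proof -
  have "\<bar>cutoff b x0 n x - cutoff b x0 n y\<bar> \<le>
     \<bar>(2 * real n - real (gdist b x0 x)) / real n - (2 * real n - real (gdist b x0 y)) / real n\<bar>"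
    unfolding cutoff_def by (rule clip_lip)
  also have "\<dots> = \<bar>real (gdist b x0 y) - real (gdist b x0 x)\<bar> / real n"
    using assms(1) by (subst diff_divide_distrib[symmetric]) (simp add: abs_divide)
  also have "\<dots> \<le> 1 / real n"
    using assms by (intro divide_right_mono) auto
  finally show ?thesis .
qed

lemma cutoff_zero:
  assumes "n \<ge> 1" "gdist b x0 x \<ge> 2 * n"
  shows "cutoff b x0 n x = 0"
proof -
  have "real (gdist b x0 x) \<ge> 2 * real n" using assms by linarith
  then have "(2 * real n - real (gdist b x0 x)) / real n \<le> 0"
    using assms(1) by (simp add: divide_nonpos_pos)
  then show ?thesis unfolding cutoff_def by simp
qed

lemma l2_fin:
  assumes "finite S" "\<And>x. x \<notin> S \<Longrightarrow> f x = 0"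
  shows "in_l2 \<mu> f \<and> l2norm \<mu> f = sqrt (\<Sum>x\<in>S. \<mu> x * (cmod (f x))\<^sup>2)"
proof -
  have "((\<lambda>x. \<mu> x * (cmod (f x))\<^sup>2) summable_on UNIV) = ((\<lambda>x. \<mu> x * (cmod (f x))\<^sup>2) summable_on S)"
    by (rule summable_on_cong_neutral) (use assms in auto)
  moreover have "infsum (\<lambda>x. \<mu> x * (cmod (f x))\<^sup>2) UNIV = infsum (\<lambda>x. \<mu> x * (cmod (f x))\<^sup>2) S"
    by (rule infsum_cong_neutral) (use assms in auto)
  ultimately show ?thesis unfolding in_l2_def l2norm_def
    using assms(1) by (simp add: infsum_finite)
qed

lemma l2_final:
  assumes "finite S" "in_l2 \<mu> u" "\<And>x. \<mu> x > 0" "c \<ge> 0"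
    and "(\<Sum>x\<in>S. \<mu> x * (cmod (f x))\<^sup>2) \<le> c\<^sup>2 * (\<Sum>x\<in>S. \<mu> x * (cmod (u x))\<^sup>2)"
  shows "sqrt (\<Sum>x\<in>S. \<mu> x * (cmod (f x))\<^sup>2) \<le> c * l2norm \<mu> u"
proof -
  have Su: "(\<Sum>x\<in>S. \<mu> x * (cmod (u x))\<^sup>2) \<le> (\<Sum>\<^sub>\<infinity>x. \<mu> x * (cmod (u x))\<^sup>2)"
    unfolding in_l2_def[symmetric]
    proof (rule finite_sum_le_infsum)
      fix x show "0 \<le> \<mu> x * (cmod (u x))\<^sup>2" using assms(3)[of x] by simp
    qed (use assms(1,2) in \<open>auto simp: in_l2_def\<close>)
  have "(\<Sum>x\<in>S. \<mu> x * (cmod (f x))\<^sup>2) \<le> c\<^sup>2 * (\<Sum>\<^sub>\<infinity>x. \<mu> x * (cmod (u x))\<^sup>2)"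
    by (rule order_trans[OF assms(5) mult_left_mono[OF Su zero_le_power2[of c]]])
  then have "sqrt (\<Sum>x\<in>S. \<mu> x * (cmod (f x))\<^sup>2) \<le> sqrt (c\<^sup>2 * (\<Sum>\<^sub>\<infinity>x. \<mu> x * (cmod (u x))\<^sup>2))"
    by (rule real_sqrt_le_mono)
  also have "\<dots> = c * l2norm \<mu> u" using assms(4) by (simp add: real_sqrt_mult l2norm_def)
  finally show ?thesis .
qed



theorem lemma5p2:
  fixes b :: "'a \<Rightarrow> 'a \<Rightarrow> real" and \<mu> :: "'a \<Rightarrow> real" and \<theta> :: "'a \<Rightarrow> 'a \<Rightarrow> real"
    and \<mu>0 :: real and x0 :: 'a and n :: nat and u :: "'a \<Rightarrow> complex"
  assumes countV: "countable (UNIV :: 'a set)" and infV: "infinite (UNIV :: 'a set)"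
    and b_nonneg: "\<And>x y. b x y \<ge> 0"
    and b_sym: "\<And>x y. b x y = b y x"
    and b_diag: "\<And>x. b x x = 0"
    and loc_fin: "\<And>x. finite {y. b x y > 0}"
    and conn: "graph_connected b"
    and mu_pos: "\<And>x. \<mu> x > 0"
    and mu0_pos: "\<mu>0 > 0" and mu_ge: "\<And>x. \<mu> x \<ge> \<mu>0"
    and theta_range: "\<And>x y. - pi \<le> \<theta> x y \<and> \<theta> x y \<le> pi"
    and theta_anti: "\<And>x y. \<theta> x y = - \<theta> y x"
    and n_pos: "n \<ge> 1"
    and u_l2: "in_l2 \<mu> u"
  shows "let \<beta> = real (dmax b x0 (2 * n)) * pmax b x0 (2 * n) / (\<mu>0 * real n) in
     in_l2 \<mu> (Pop b \<mu> \<theta> (cutoff b x0 n) u)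
     \<and> l2norm \<mu> (Pop b \<mu> \<theta> (cutoff b x0 n) u) \<le> 2 * \<beta> * l2norm \<mu> u
     \<and> in_l2 \<mu> (\<lambda>x. u x * complex_of_real (glap b \<mu> (cutoff b x0 n) x))
     \<and> l2norm \<mu> (\<lambda>x. u x * complex_of_real (glap b \<mu> (cutoff b x0 n) x)) \<le> \<beta> * l2norm \<mu> u"
proof -
  define S where "S = gball b x0 (2 * n)"
  define chi where "chi = cutoff b x0 n"
  define d where "d = dmax b x0 (2 * n)"
  define p where "p = pmax b x0 (2 * n)"
  define \<beta> where "\<beta> = real d * p / (\<mu>0 * real n)"
  define w where "w x = \<mu> x * (cmod (u x))\<^sup>2" for x
  define T where "T x = {y\<in>S. b x y > 0}" for x
  have finS: "finite S" unfolding S_def by (rule gball_finite[OF loc_fin conn])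
  have nr: "real n \<ge> 1" using n_pos by simp
  have rstep: "\<bar>real (gdist b x0 x) - real (gdist b x0 y)\<bar> \<le> 1" if "b x y > 0" for x y
  proof -
    have "gdist b x0 y \<le> gdist b x0 x + 1" using gdist_step[OF conn that] .
    moreover have "gdist b x0 x \<le> gdist b x0 y + 1" using gdist_step[OF conn, of y x x0] that by (simp add: b_sym[of y x])
    ultimately show ?thesis by linarith
  qed
  have K1: "\<bar>chi x - chi y\<bar> \<le> 1 / real n" if "b x y > 0" for x y
    unfolding chi_def using cutoff_lip[OF n_pos rstep[OF that]] .
  have K2: "chi x = chi y" if "b x y > 0" "x \<notin> S \<or> y \<notin> S" for x y
  proof -
    have "gdist b x0 y \<le> gdist b x0 x + 1" using gdist_step[OF conn that(1)] .
    moreover have "gdist b x0 x \<le> gdist b x0 y + 1" using gdist_step[OF conn, of y x x0] that by (simp add: b_sym[of y x])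
    moreover have "gdist b x0 x > 2 * n \<or> gdist b x0 y > 2 * n" using that(2) unfolding S_def gball_def by auto
    ultimately have "gdist b x0 x \<ge> 2 * n" "gdist b x0 y \<ge> 2 * n" by auto
    then show ?thesis unfolding chi_def using cutoff_zero[OF n_pos] by metis
  qed
  have Nfin: "finite {y. b x y > 0}" for x by (rule loc_fin)
  have K3: "card {y. b x y > 0} \<le> d" if "x \<in> S" for x
  proof -
    have "gdeg b x \<in> gdeg b ` S" using that by simp
    then show ?thesis unfolding d_def dmax_def S_def[symmetric] gdeg_def[symmetric]
      using finS by (simp add: Max_ge)
  qed
  have K4: "b x y \<le> p" if "x \<in> S" for x y
  proof -
    have "range (b x) \<subseteq> insert 0 (b x ` {y. b x y > 0})"
      using b_nonneg by (auto simp: order_le_less)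
    then have fr: "finite (range (b x))" using Nfin finite_subset by blast
    have "b x y \<le> Max (range (b x))" using fr by (simp add: Max_ge)
    also have "\<dots> \<le> p" unfolding p_def pmax_def S_def[symmetric]
      using finS that by (intro Max_ge) auto
    finally show ?thesis .
  qed
  have x0S: "x0 \<in> S" unfolding S_def gball_def
    using gdist_le[of b 0 x0 x0] by simp
  have p0: "p \<ge> 0" using K4[OF x0S, of x0] b_diag by simp
  have beta0: "\<beta> \<ge> 0" unfolding \<beta>_def using p0 mu0_pos by simp
  have w0: "w x \<ge> 0" for x unfolding w_def using mu_pos[of x] by simp
  have G0: "glap b \<mu> chi x = 0" if "x \<notin> S" for x
  proof -
    have "(\<Sum>y\<in>{y. b x y > 0}. b x y * (chi x - chi y)) = 0"
      using K2 that by (intro sum.neutral) auto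
    then show ?thesis unfolding glap_def by simp
  qed
  have G1: "\<bar>glap b \<mu> chi x\<bar> \<le> \<beta>" if "x \<in> S" for x
  proof -
    have "\<bar>\<Sum>y\<in>{y. b x y > 0}. b x y * (chi x - chi y)\<bar> \<le> (\<Sum>y\<in>{y. b x y > 0}. \<bar>b x y * (chi x - chi y)\<bar>)"
      by (rule sum_abs)
    also have "\<dots> \<le> (\<Sum>y\<in>{y. b x y > 0}. p * (1 / real n))"
    proof (rule sum_mono)
      fix y assume "y \<in> {y. b x y > 0}"
      then have "b x y > 0" by simp
      then show "\<bar>b x y * (chi x - chi y)\<bar> \<le> p * (1 / real n)"
        using mult_mono[OF K4[OF that] K1[of x y]] p0 b_nonneg[of x y] by (simp add: abs_mult)
    qed
    also have "\<dots> = card {y. b x y > 0} * (p / real n)" by simp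
    also have "\<dots> \<le> d * (p / real n)" using K3[OF that] p0 by (intro mult_right_mono) auto
    finally have A: "\<bar>\<Sum>y\<in>{y. b x y > 0}. b x y * (chi x - chi y)\<bar> \<le> d * (p / real n)" .
    have "\<bar>glap b \<mu> chi x\<bar> = \<bar>\<Sum>y\<in>{y. b x y > 0}. b x y * (chi x - chi y)\<bar> / \<mu> x"
      unfolding glap_def using mu_pos[of x] by (simp add: abs_mult)
    also have "\<dots> \<le> (d * (p / real n)) / \<mu>0"
      using A mu_ge[of x] mu0_pos p0 by (intro frac_le) auto
    also have "\<dots> = \<beta>" unfolding \<beta>_def by simp
    finally show ?thesis .
  qed
  define g where "g x = u x * complex_of_real (glap b \<mu> chi x)" for x
  have g0: "g x = 0" if "x \<notin> S" for x unfolding g_def using G0[OF that] by simp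
  have gsum: "(\<Sum>x\<in>S. \<mu> x * (cmod (g x))\<^sup>2) \<le> \<beta>\<^sup>2 * (\<Sum>x\<in>S. w x)"
    unfolding sum_distrib_left
  proof (rule sum_mono)
    fix x assume xS: "x \<in> S"
    have "(glap b \<mu> chi x)\<^sup>2 \<le> \<beta>\<^sup>2" using power_mono[OF G1[OF xS] abs_ge_zero, of 2] by simp
    then have "w x * (glap b \<mu> chi x)\<^sup>2 \<le> w x * \<beta>\<^sup>2" using w0 by (rule mult_left_mono)
    then show "\<mu> x * (cmod (g x))\<^sup>2 \<le> \<beta>\<^sup>2 * w x"
      unfolding g_def w_def by (simp add: norm_mult power_mult_distrib algebra_simps)
  qed
  have G_l2: "in_l2 \<mu> g" and G_eq: "l2norm \<mu> g = sqrt (\<Sum>x\<in>S. \<mu> x * (cmod (g x))\<^sup>2)"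
    using l2_fin[OF finS g0] by auto
  have G_le: "l2norm \<mu> g \<le> \<beta> * l2norm \<mu> u"
    unfolding G_eq using gsum unfolding w_def by (intro l2_final[OF finS u_l2 mu_pos beta0])

  define P where "P = Pop b \<mu> \<theta> chi u"
  define a where "a y = cmod (u y)" for y
  define F where "F x y = complex_of_real (b x y * (chi x - chi y)) *
        (u x - exp (\<i> * complex_of_real (\<theta> x y)) * u y)" for x y
  have Pdef: "P x = complex_of_real (1 / \<mu> x) * (\<Sum>y\<in>{y. b x y > 0}. F x y)" for x
    unfolding P_def Pop_def F_def chi_def ..
  have P0: "P x = 0" if "x \<notin> S" for x
  proof -
    have "(\<Sum>y\<in>{y. b x y > 0}. F x y) = 0"
      using K2 that unfolding F_def by (intro sum.neutral) auto
    then show ?thesis unfolding Pdef by simp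
  qed
  have Tsub: "T x \<subseteq> {y. b x y > 0}" for x unfolding T_def by auto
  have finT: "finite (T x)" for x using finite_subset[OF Tsub Nfin] .
  have cardT: "card (T x) \<le> d" if "x \<in> S" for x
    using card_mono[OF Nfin[of x] Tsub[of x]] K3[OF that] by linarith
  have Fb: "cmod (F x y) \<le> (p / real n) * (a x + a y)" if "x \<in> S" "b x y > 0" for x y
  proof -
    have e: "cmod (exp (\<i> * complex_of_real (\<theta> x y))) = 1" by simp
    have "cmod (u x - exp (\<i> * complex_of_real (\<theta> x y)) * u y) \<le> a x + a y"
      unfolding a_def using norm_triangle_ineq4[of "u x" "exp (\<i> * complex_of_real (\<theta> x y)) * u y"]
      by (simp add: norm_mult e)
    moreover have "\<bar>b x y * (chi x - chi y)\<bar> \<le> p / real n"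
      using mult_mono[OF K4[OF that(1)] K1[OF that(2)]] p0 b_nonneg[of x y] by (simp add: abs_mult)
    ultimately show ?thesis unfolding F_def norm_mult norm_of_real
      by (intro mult_mono) (auto simp: a_def)
  qed
  have h1: "cmod (P x) \<le> (p / real n) * (\<Sum>y\<in>T x. a x + a y) / \<mu> x" if xS: "x \<in> S" for x
  proof -
    have "cmod (\<Sum>y\<in>{y. b x y > 0}. F x y) \<le> (\<Sum>y\<in>{y. b x y > 0}. cmod (F x y))"
      by (rule norm_sum)
    also have "\<dots> = (\<Sum>y\<in>T x. cmod (F x y))"
    proof (rule sum.mono_neutral_right[OF Nfin Tsub])
      show "\<forall>y\<in>{y. b x y > 0} - T x. cmod (F x y) = 0"
        using K2 unfolding T_def F_def by auto
    qed
    also have "\<dots> \<le> (\<Sum>y\<in>T x. (p / real n) * (a x + a y))"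
      using Fb[OF xS] unfolding T_def by (intro sum_mono) auto
    also have "\<dots> = (p / real n) * (\<Sum>y\<in>T x. a x + a y)" by (simp add: sum_distrib_left)
    finally have A: "cmod (\<Sum>y\<in>{y. b x y > 0}. F x y) \<le> (p / real n) * (\<Sum>y\<in>T x. a x + a y)" .
    have "cmod (P x) = cmod (\<Sum>y\<in>{y. b x y > 0}. F x y) / \<mu> x"
      unfolding Pdef using mu_pos[of x] by (simp add: norm_mult norm_divide)
    also have "\<dots> \<le> (p / real n) * (\<Sum>y\<in>T x. a x + a y) / \<mu> x"
      by (rule divide_right_mono[OF A less_imp_le[OF mu_pos[of x]]])
    finally show ?thesis .
  qed
  define C where "C = (p / real n)\<^sup>2 * (2 * real d) / \<mu>0\<^sup>2"
  have C0: "C \<ge> 0" unfolding C_def by simp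
  have h2: "\<mu> x * (cmod (P x))\<^sup>2 \<le> C * (\<Sum>y\<in>T x. w x + w y)" if xS: "x \<in> S" for x
  proof -
    define A where "A = (\<Sum>y\<in>T x. a x + a y)"
    have a0: "a y \<ge> 0" for y unfolding a_def by simp
    have A0: "A \<ge> 0" unfolding A_def using a0 by (intro sum_nonneg) (simp add: add_nonneg_nonneg)
    have mx: "\<mu> x > 0" by (rule mu_pos)
    have "cmod (P x) \<le> (p / real n) * A / \<mu> x" using h1[OF xS] unfolding A_def .
    then have "(cmod (P x))\<^sup>2 \<le> ((p / real n) * A / \<mu> x)\<^sup>2"
      by (intro power_mono) auto
    then have "\<mu> x * (cmod (P x))\<^sup>2 \<le> \<mu> x * ((p / real n) * A / \<mu> x)\<^sup>2"
      using mx by simp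
    also have "\<dots> = (p / real n)\<^sup>2 * A\<^sup>2 / \<mu> x" using mx by (simp add: power2_eq_square field_simps)
    also have "A\<^sup>2 \<le> (\<Sum>y\<in>T x. 2 * ((a x)\<^sup>2 + (a y)\<^sup>2)) * real d"
    proof -
      have "A\<^sup>2 \<le> (\<Sum>y\<in>T x. (a x + a y)\<^sup>2) * real (card (T x))"
        unfolding A_def by (rule sum_squared_le_sum_of_squares)
      also have "\<dots> \<le> (\<Sum>y\<in>T x. 2 * ((a x)\<^sup>2 + (a y)\<^sup>2)) * real (card (T x))"
      proof (intro mult_right_mono sum_mono)
        fix y show "(a x + a y)\<^sup>2 \<le> 2 * ((a x)\<^sup>2 + (a y)\<^sup>2)"
          using zero_le_power2[of "a x - a y"] unfolding power2_diff power2_sum by (smt (verit))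
      qed auto
      also have "\<dots> \<le> (\<Sum>y\<in>T x. 2 * ((a x)\<^sup>2 + (a y)\<^sup>2)) * real d"
        using cardT[OF xS] by (intro mult_left_mono sum_nonneg) auto
      finally show ?thesis .
    qed
    then have "(p / real n)\<^sup>2 * A\<^sup>2 / \<mu> x \<le> (p / real n)\<^sup>2 * ((\<Sum>y\<in>T x. 2 * ((a x)\<^sup>2 + (a y)\<^sup>2)) * real d) / \<mu> x"
      using mx by (intro divide_right_mono mult_left_mono) auto
    also have "\<dots> = (p / real n)\<^sup>2 * (2 * real d) * (\<Sum>y\<in>T x. (a x)\<^sup>2 / \<mu> x + (a y)\<^sup>2 / \<mu> x)"
    proof -
      define Q where "Q = (\<Sum>y\<in>T x. (a x)\<^sup>2 + (a y)\<^sup>2)"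
      have q1: "(\<Sum>y\<in>T x. 2 * ((a x)\<^sup>2 + (a y)\<^sup>2)) = 2 * Q"
        unfolding Q_def by (rule sum_distrib_left[symmetric])
      have q2: "(\<Sum>y\<in>T x. (a x)\<^sup>2 / \<mu> x + (a y)\<^sup>2 / \<mu> x) = Q / \<mu> x"
        unfolding Q_def sum_divide_distrib add_divide_distrib ..
      show ?thesis unfolding q1 q2 by simp
    qed
    also have "\<dots> \<le> (p / real n)\<^sup>2 * (2 * real d) * (\<Sum>y\<in>T x. w x / \<mu>0\<^sup>2 + w y / \<mu>0\<^sup>2)"
    proof (intro mult_left_mono sum_mono add_mono)
      fix y
      have m2: "\<mu>0\<^sup>2 \<le> \<mu> x * \<mu> y" unfolding power2_eq_square
        using mu_ge less_imp_le[OF mu_pos[of x]] less_imp_le[OF mu_pos[of y]] less_imp_le[OF mu0_pos] by (intro mult_mono) auto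
      have m1: "\<mu>0\<^sup>2 \<le> \<mu> x * \<mu> x" unfolding power2_eq_square
        using mu_ge less_imp_le[OF mu_pos[of x]] less_imp_le[OF mu_pos[of y]] less_imp_le[OF mu0_pos] by (intro mult_mono) auto
      have "(a x)\<^sup>2 / \<mu> x = \<mu> x * (a x)\<^sup>2 / (\<mu> x * \<mu> x)" using mx by simp
      also have "\<dots> \<le> \<mu> x * (a x)\<^sup>2 / \<mu>0\<^sup>2"
        using m1 mx mu0_pos by (intro divide_left_mono) auto
      finally show "(a x)\<^sup>2 / \<mu> x \<le> w x / \<mu>0\<^sup>2" unfolding w_def a_def .
      have "(a y)\<^sup>2 / \<mu> x = \<mu> y * (a y)\<^sup>2 / (\<mu> x * \<mu> y)" using mu_pos[of y] by simp
      also have "\<dots> \<le> \<mu> y * (a y)\<^sup>2 / \<mu>0\<^sup>2"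
        using m2 mx mu_pos[of y] mu0_pos by (intro divide_left_mono) auto
      finally show "(a y)\<^sup>2 / \<mu> x \<le> w y / \<mu>0\<^sup>2" unfolding w_def a_def .
    qed auto
    also have "\<dots> = C * (\<Sum>y\<in>T x. w x + w y)"
    proof -
      have q3: "(\<Sum>y\<in>T x. w x / \<mu>0\<^sup>2 + w y / \<mu>0\<^sup>2) = (\<Sum>y\<in>T x. w x + w y) / \<mu>0\<^sup>2"
        unfolding sum_divide_distrib add_divide_distrib ..
      show ?thesis unfolding q3 C_def by simp
    qed
    finally show ?thesis .
  qed
  have swap: "(\<Sum>x\<in>S. \<Sum>y\<in>T x. w y) = (\<Sum>y\<in>S. real (card (T y)) * w y)"
  proof -
    have "(\<Sum>x\<in>S. \<Sum>y\<in>T x. w y) = (\<Sum>x\<in>S. \<Sum>y\<in>S. if b x y > 0 then w y else 0)"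
      unfolding T_def by (simp add: sum.inter_filter[OF finS])
    also have "\<dots> = (\<Sum>y\<in>S. \<Sum>x\<in>S. if b y x > 0 then w y else 0)"
      by (subst sum.swap) (simp add: b_sym)
    also have "\<dots> = (\<Sum>y\<in>S. real (card (T y)) * w y)"
      unfolding T_def by (simp add: sum.inter_filter[OF finS, symmetric])
    finally show ?thesis .
  qed
  have Psum: "(\<Sum>x\<in>S. \<mu> x * (cmod (P x))\<^sup>2) \<le> (2 * \<beta>)\<^sup>2 * (\<Sum>x\<in>S. w x)"
  proof -
    have "(\<Sum>x\<in>S. \<mu> x * (cmod (P x))\<^sup>2) \<le> (\<Sum>x\<in>S. C * (\<Sum>y\<in>T x. w x + w y))"
      using h2 by (rule sum_mono)
    also have "\<dots> = C * ((\<Sum>x\<in>S. real (card (T x)) * w x) + (\<Sum>x\<in>S. \<Sum>y\<in>T x. w y))"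
      by (simp add: sum_distrib_left sum.distrib distrib_left)
    also have "\<dots> = C * ((\<Sum>x\<in>S. real (card (T x)) * w x) + (\<Sum>x\<in>S. real (card (T x)) * w x))"
      using swap by simp
    also have "\<dots> \<le> C * ((\<Sum>x\<in>S. real d * w x) + (\<Sum>x\<in>S. real d * w x))"
      using cardT w0 C0 by (intro mult_left_mono add_mono sum_mono mult_right_mono) auto
    also have "\<dots> = (C * 2 * real d) * (\<Sum>x\<in>S. w x)"
      unfolding sum_distrib_left[symmetric] by (simp add: algebra_simps)
    also have "C * 2 * real d = (2 * \<beta>)\<^sup>2"
      unfolding C_def \<beta>_def using mu0_pos nr by (simp add: power2_eq_square power_divide mult_ac)
    finally show ?thesis .
  qed
  have P_l2: "in_l2 \<mu> P" and P_eq: "l2norm \<mu> P = sqrt (\<Sum>x\<in>S. \<mu> x * (cmod (P x))\<^sup>2)"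
    using l2_fin[OF finS P0] by auto
  have P_le: "l2norm \<mu> P \<le> 2 * \<beta> * l2norm \<mu> u"
    unfolding P_eq using Psum beta0 unfolding w_def by (intro l2_final[OF finS u_l2 mu_pos]) auto
  have e1: "Pop b \<mu> \<theta> (cutoff b x0 n) u = P" by (simp add: P_def chi_def)
  have e2: "(\<lambda>x. u x * complex_of_real (glap b \<mu> (cutoff b x0 n) x)) = g"
    by (rule ext) (simp add: g_def chi_def)
  have e3: "real (dmax b x0 (2 * n)) * pmax b x0 (2 * n) / (\<mu>0 * real n) = \<beta>"
    by (simp add: \<beta>_def d_def p_def)
  show ?thesis unfolding Let_def e1 e2 e3 using P_l2 P_le G_l2 G_le by blast
qed

end
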